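(* Let $X$ be a real Banach space, $k\in\mathbb N$, and $Y$ a proximinal closed subspace of $X$. Then $Y$ is a $k$-Chebyshev subspace of $X$ if and only if $\dim\big(\{S(X,y^\perp)-x\}\cap Y\big)<k$ for all $y^\perp\in S_{Y^\perp}$ and all $x\in S(X,y^\perp)$.
   Context: For $x^*\in X^*\setminus\{0\}$, $S(X,x^* )=\{x\in S_X:x^*(x)=\|x^*\|\}$, and $S(X,x^* )-x=\{z-x:z\in S(X,x^* )\}$. $Y^\perp=\{x^*\in X^*:x^*|_Y=0\}$ and $S_{Y^\perp}$ its unit sphere. For a set $A$ and $a\in A$, $\dim A=\dim\operatorname{span}(A-a)$. $Y$ is proximinal if $P_Y(x)=\{y\in Y:\|x-y\|=d(x,Y)\}\neq\emptyset$ for all $x\in X$; a proximinal $Y$ is $k$-Chebyshev if $\dim P_Y(x)\le k-1$ for all $x\in X$. *)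

theory Defs
  imports "HOL-Analysis.Analysis" "HOL-Library.Extended_Nat"
begin

text \<open>Elements of the dual space X* are bounded linear functionals X \<Rightarrow> real,
  with dual norm onorm.\<close>

definition face :: "('a::real_normed_vector \<Rightarrow> real) \<Rightarrow> 'a set" where
  "face f = {x \<in> sphere 0 1. f x = onorm f}"

definition annihilator_sphere :: "'a::real_normed_vector set \<Rightarrow> ('a \<Rightarrow> real) set" where
  "annihilator_sphere Y = {f. bounded_linear f \<and> (\<forall>y\<in>Y. f y = 0) \<and> onorm f = 1}"

definition set_dim :: "'a::real_vector set \<Rightarrow> enat" where
  "set_dim A = (let a = (SOME a. a \<in> A); V = span ((\<lambda>z. z - a) ` A) in
     if \<exists>B. finite B \<and> V = span B then enat (dim V) else \<infinity>)"

definition metric_proj :: "'a::real_normed_vector set \<Rightarrow> 'a \<Rightarrow> 'a set" where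
  "metric_proj Y x = {y \<in> Y. norm (x - y) = infdist x Y}"

definition proximinal :: "'a::real_normed_vector set \<Rightarrow> bool" where
  "proximinal Y \<longleftrightarrow> (\<forall>x. metric_proj Y x \<noteq> {})"

text \<open>dim P_Y(x) \<le> k - 1, written as dim P_Y(x) < k (integer dimensions)\<close>
definition k_chebyshev :: "'a::real_normed_vector set \<Rightarrow> nat \<Rightarrow> bool" where
  "k_chebyshev Y k \<longleftrightarrow> proximinal Y \<and> (\<forall>x. set_dim (metric_proj Y x) < enat k)"

end

theory Submission
  imports Defs
begin

lemma hb_graph:
  fixes G0 :: "('a::real_vector \<times> real) set" and p :: "'a \<Rightarrow> real"
  assumes sub: "\<And>u v. p (u + v) \<le> p u + p v"
    and hom: "\<And>t u. t \<ge> 0 \<Longrightarrow> p (t *\<^sub>R u) = t * p u"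
    and z: "(0, 0) \<in> G0"
    and add0: "\<And>u a v b. (u, a) \<in> G0 \<Longrightarrow> (v, b) \<in> G0 \<Longrightarrow> (u + v, a + b) \<in> G0"
    and sc0: "\<And>u a c. (u, a) \<in> G0 \<Longrightarrow> (c *\<^sub>R u, c * a) \<in> G0"
    and dom0: "\<And>u a. (u, a) \<in> G0 \<Longrightarrow> a \<le> p u"
  shows "\<exists>f. linear f \<and> (\<forall>v. f v \<le> p v) \<and> (\<forall>u a. (u, a) \<in> G0 \<longrightarrow> f u = a)"
proof -
  define A where "A = {G. G0 \<subseteq> G \<and> (\<forall>u a v b. (u, a) \<in> G \<longrightarrow> (v, b) \<in> G \<longrightarrow> (u + v, a + b) \<in> G)
     \<and> (\<forall>u a c. (u, a) \<in> G \<longrightarrow> (c *\<^sub>R u, c * a) \<in> G) \<and> (\<forall>u a. (u, a) \<in> G \<longrightarrow> a \<le> p u)}"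
  have G0A: "G0 \<in> A" unfolding A_def using add0 sc0 dom0 by blast
  have "\<forall>C\<in>chains A. \<exists>U\<in>A. \<forall>X\<in>C. X \<subseteq> U"
  proof
    fix C assume C: "C \<in> chains A"
    show "\<exists>U\<in>A. \<forall>X\<in>C. X \<subseteq> U"
    proof (cases "C = {}")
      case True then show ?thesis using G0A by blast
    next
      case False
      have CA: "C \<subseteq> A" and ch: "\<And>X Y. X \<in> C \<Longrightarrow> Y \<in> C \<Longrightarrow> X \<subseteq> Y \<or> Y \<subseteq> X"
        using C unfolding chains_def chain_subset_def by auto
      have "\<Union>C \<in> A"
        unfolding A_def
      proof (intro CollectI conjI allI impI)
        show "G0 \<subseteq> \<Union>C" using False CA unfolding A_def by blast
      next
        fix u a v b assume "(u, a) \<in> \<Union>C" "(v, b) \<in> \<Union>C"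
        then obtain X Y where XY: "X \<in> C" "Y \<in> C" "(u,a) \<in> X" "(v,b) \<in> Y" by blast
        from ch[OF XY(1,2)] show "(u + v, a + b) \<in> \<Union>C"
        proof
          assume "X \<subseteq> Y"
          moreover have "\<forall>u a v b. (u, a) \<in> Y \<longrightarrow> (v, b) \<in> Y \<longrightarrow> (u + v, a + b) \<in> Y"
            using XY(2) CA unfolding A_def by blast
          ultimately show ?thesis using XY by blast
        next
          assume "Y \<subseteq> X"
          moreover have "\<forall>u a v b. (u, a) \<in> X \<longrightarrow> (v, b) \<in> X \<longrightarrow> (u + v, a + b) \<in> X"
            using XY(1) CA unfolding A_def by blast
          ultimately show ?thesis using XY by blast
        qed
      next
        fix u a c assume "(u, a) \<in> \<Union>C"
        then show "(c *\<^sub>R u, c * a) \<in> \<Union>C" using CA unfolding A_def by blast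
      next
        fix u a assume "(u, a) \<in> \<Union>C"
        then show "a \<le> p u" using CA unfolding A_def by blast
      qed
      then show ?thesis by blast
    qed
  qed
  from Zorn_Lemma2[OF this] obtain M where MA: "M \<in> A" and Mmax: "\<And>X. X \<in> A \<Longrightarrow> M \<subseteq> X \<Longrightarrow> X = M"
    by blast
  have G0M: "G0 \<subseteq> M" and addM: "\<And>u a v b. (u, a) \<in> M \<Longrightarrow> (v, b) \<in> M \<Longrightarrow> (u + v, a + b) \<in> M"
    and scM: "\<And>u a c. (u, a) \<in> M \<Longrightarrow> (c *\<^sub>R u, c * a) \<in> M"
    and domM: "\<And>u a. (u, a) \<in> M \<Longrightarrow> a \<le> p u"
    using MA unfolding A_def by blast+
  have p0: "p 0 = 0" using hom[of 0 0] by simp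
  have funM: "a = b" if "(v, a) \<in> M" "(v, b) \<in> M" for v a b
  proof -
    have "(0, a - b) \<in> M" using addM[OF that(1) scM[OF that(2), of "-1"]] by simp
    moreover have "(0, b - a) \<in> M" using addM[OF that(2) scM[OF that(1), of "-1"]] by simp
    ultimately have "a - b \<le> p 0" "b - a \<le> p 0" using domM by blast+
    then show ?thesis using p0 by simp
  qed
  have total: "\<exists>a. (v, a) \<in> M" for v
  proof (rule ccontr)
    assume nv: "\<not> (\<exists>a. (v, a) \<in> M)"
    define L where "L = {a - p (u - v) | u a. (u, a) \<in> M}"
    have key: "a - p (u - v) \<le> p (w + v) - b" if "(u, a) \<in> M" "(w, b) \<in> M" for u a w b
    proof -
      have "a + b \<le> p (u + w)" using domM addM that by blast
      also have "p (u + w) = p ((u - v) + (w + v))" by (simp add: algebra_simps)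
      also have "\<dots> \<le> p (u - v) + p (w + v)" by (rule sub)
      finally show ?thesis by simp
    qed
    define c where "c = Sup L"
    have zM: "(0, 0) \<in> M" using z G0M by blast
    have Lne: "L \<noteq> {}" using zM unfolding L_def by blast
    have Lbdd: "bdd_above L" unfolding L_def bdd_above_def using key zM by blast
    have c1: "a - p (u - v) \<le> c" if "(u, a) \<in> M" for u a
      unfolding c_def by (rule cSup_upper[OF _ Lbdd]) (use that L_def in blast)
    have c2: "c \<le> p (w + v) - b" if "(w, b) \<in> M" for w b
      unfolding c_def by (rule cSup_least[OF Lne]) (use that key L_def in blast)
    define M' where "M' = {(u + t *\<^sub>R v, a + t * c) | u a t. (u, a) \<in> M}"
    have "M' \<in> A"
      unfolding A_def
    proof (intro CollectI conjI allI impI)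
      show "G0 \<subseteq> M'"
      proof
        fix q assume "q \<in> G0"
        then obtain u a where "q = (u, a)" "(u, a) \<in> M" using G0M by (cases q) blast
        moreover have "q = (u + 0 *\<^sub>R v, a + 0 * c)" using \<open>q = (u, a)\<close> by simp
        ultimately show "q \<in> M'" unfolding M'_def by blast
      qed
    next
      fix u a w b assume "(u, a) \<in> M'" "(w, b) \<in> M'"
      then obtain u1 a1 t1 u2 a2 t2 where h: "u = u1 + t1 *\<^sub>R v" "a = a1 + t1 * c" "(u1, a1) \<in> M"
        "w = u2 + t2 *\<^sub>R v" "b = a2 + t2 * c" "(u2, a2) \<in> M" unfolding M'_def by blast
      have "(u1 + u2, a1 + a2) \<in> M" using addM h by blast
      moreover have "u + w = (u1 + u2) + (t1 + t2) *\<^sub>R v" "a + b = (a1 + a2) + (t1 + t2) * c"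
        using h by (auto simp: algebra_simps)
      ultimately show "(u + w, a + b) \<in> M'" unfolding M'_def by blast
    next
      fix u a s assume "(u, a) \<in> M'"
      then obtain u1 a1 t1 where h: "u = u1 + t1 *\<^sub>R v" "a = a1 + t1 * c" "(u1, a1) \<in> M"
        unfolding M'_def by blast
      have "(s *\<^sub>R u1, s * a1) \<in> M" using scM h by blast
      moreover have "s *\<^sub>R u = s *\<^sub>R u1 + (s * t1) *\<^sub>R v" "s * a = s * a1 + (s * t1) * c"
        using h by (auto simp: algebra_simps)
      ultimately show "(s *\<^sub>R u, s * a) \<in> M'" unfolding M'_def by blast
    next
      fix u a assume "(u, a) \<in> M'"
      then obtain u1 a1 t where h: "u = u1 + t *\<^sub>R v" "a = a1 + t * c" "(u1, a1) \<in> M"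
        unfolding M'_def by blast
      consider "t = 0" | "t > 0" | "t < 0" by linarith
      then show "a \<le> p u"
      proof cases
        case 1 then show ?thesis using h domM by simp
      next
        case 2
        have "((1/t) *\<^sub>R u1, (1/t) * a1) \<in> M" using scM h by blast
        from c2[OF this] have "c \<le> p ((1/t) *\<^sub>R u1 + v) - a1 / t" by simp
        then have "t * c \<le> t * p ((1/t) *\<^sub>R u1 + v) - a1" using 2
          by (simp add: field_simps)
        also have "t * p ((1/t) *\<^sub>R u1 + v) = p (t *\<^sub>R ((1/t) *\<^sub>R u1 + v))"
          using hom[of t] 2 by simp
        also have "t *\<^sub>R ((1/t) *\<^sub>R u1 + v) = u" using h 2 by (simp add: algebra_simps)
        finally show ?thesis using h by simp
      next
        case 3
        define s where "s = - t"
        have s: "s > 0" using 3 s_def by simp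
        have "((1/s) *\<^sub>R u1, (1/s) * a1) \<in> M" using scM h by blast
        from c1[OF this] have "a1 / s - p ((1/s) *\<^sub>R u1 - v) \<le> c" by simp
        then have "a1 - s * p ((1/s) *\<^sub>R u1 - v) \<le> s * c" using s
          by (simp add: field_simps)
        also have "s * p ((1/s) *\<^sub>R u1 - v) = p (s *\<^sub>R ((1/s) *\<^sub>R u1 - v))"
          using hom[of s] s by simp
        also have "s *\<^sub>R ((1/s) *\<^sub>R u1 - v) = u" using h s s_def by (simp add: algebra_simps)
        finally show ?thesis using h s_def by simp
      qed
    qed
    moreover have "M \<subseteq> M'"
    proof
      fix q assume "q \<in> M"
      then obtain u a where "q = (u, a)" "(u, a) \<in> M" by (cases q) blast
      moreover have "q = (u + 0 *\<^sub>R v, a + 0 * c)" using \<open>q = (u, a)\<close> by simp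
        ultimately show "q \<in> M'" unfolding M'_def by blast
    qed
    ultimately have "M' = M" using Mmax by blast
    moreover have "(v, c) \<in> M'"
    proof -
      have "(v, c) = (0 + 1 *\<^sub>R v, 0 + 1 * c)" by simp
      then show ?thesis unfolding M'_def using zM by blast
    qed
    ultimately show False using nv by blast
  qed
  define f where "f v = (SOME a. (v, a) \<in> M)" for v
  have fM: "(v, f v) \<in> M" for v unfolding f_def using total[of v] by (rule someI_ex)
  have fa: "f v = a" if "(v, a) \<in> M" for v a using funM[OF fM that] .
  have "linear f"
  proof (rule linearI)
    fix x y show "f (x + y) = f x + f y" using fa addM fM by blast
  next
    fix r x show "f (r *\<^sub>R x) = r *\<^sub>R f x" using fa scM fM by simp
  qed
  moreover have "\<forall>v. f v \<le> p v" using domM fM by blast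
  moreover have "\<forall>u a. (u, a) \<in> G0 \<longrightarrow> f u = a" using fa G0M by blast
  ultimately show ?thesis by blast
qed


lemma span_base:
  assumes "a \<in> A" "a' \<in> A"
  shows "span ((\<lambda>z. z - a) ` A) \<subseteq> span ((\<lambda>z. z - a') ` A)"
proof (rule span_minimal[OF _ subspace_span])
  show "(\<lambda>z. z - a) ` A \<subseteq> span ((\<lambda>z. z - a') ` A)"
  proof
    fix w assume "w \<in> (\<lambda>z. z - a) ` A"
    then obtain z where z: "z \<in> A" "w = z - a" by blast
    have "z - a' \<in> span ((\<lambda>z. z - a') ` A)" using z by (intro span_base) blast
    moreover have "a - a' \<in> span ((\<lambda>z. z - a') ` A)" using assms by (intro span_base) blast
    ultimately have "(z - a') - (a - a') \<in> span ((\<lambda>z. z - a') ` A)" by (rule span_diff)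
    then show "w \<in> span ((\<lambda>z. z - a') ` A)" using z by simp
  qed
qed

lemma set_dim_lt:
  fixes A :: "'a::real_vector set"
  assumes aA: "a \<in> A"
  shows "set_dim A < enat k \<longleftrightarrow> (\<exists>B. finite B \<and> card B < k \<and> (\<lambda>z. z - a) ` A \<subseteq> span B)"
proof -
  define a0 where "a0 = (SOME a. a \<in> A)"
  have a0: "a0 \<in> A" unfolding a0_def using aA by (rule someI)
  define V where "V = span ((\<lambda>z. z - a) ` A)"
  have V: "span ((\<lambda>z. z - a0) ` A) = V" unfolding V_def
    using span_base[OF aA a0] span_base[OF a0 aA] by blast
  have sd: "set_dim A = (if \<exists>B. finite B \<and> V = span B then enat (dim V) else \<infinity>)"
    unfolding set_dim_def Let_def a0_def[symmetric] V ..
  have subV: "subspace V" unfolding V_def by simp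
  obtain C where C: "C \<subseteq> V" "independent C" "V \<subseteq> span C" "card C = dim V"
    by (rule basis_exists)
  have VC: "V = span C" using C span_minimal[OF C(1) subV] by blast
  show ?thesis
  proof
    assume lt: "set_dim A < enat k"
    then obtain B0 where B0: "finite B0" "V = span B0" using sd by (auto split: if_splits)
    then have ex: "\<exists>B. finite B \<and> V = span B" by blast
    have "set_dim A = enat (dim V)" using sd ex by simp
    then have "dim V < k" using lt by simp
    moreover have "finite C" using independent_span_bound[OF B0(1) C(2)] C(1) B0(2) by blast
    ultimately show "\<exists>B. finite B \<and> card B < k \<and> (\<lambda>z. z - a) ` A \<subseteq> span B"
    proof (intro exI[of _ C] conjI)
      have "(\<lambda>z. z - a) ` A \<subseteq> V" unfolding V_def by (rule span_superset)
      then show "(\<lambda>z. z - a) ` A \<subseteq> span C" using VC by simp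
    qed (use C in auto)
  next
    assume "\<exists>B. finite B \<and> card B < k \<and> (\<lambda>z. z - a) ` A \<subseteq> span B"
    then obtain B where B: "finite B" "card B < k" "(\<lambda>z. z - a) ` A \<subseteq> span B" by blast
    have "V \<subseteq> span B" unfolding V_def using B(3) span_minimal subspace_span by blast
    then have "finite C \<and> card C \<le> card B" using independent_span_bound[OF B(1) C(2)] C(1) by blast
    then show "set_dim A < enat k" using sd VC C(4) B(2) by auto
  qed
qed

theorem theorem4p4:
  fixes Y :: "'a::banach set" and k :: nat
  assumes "k \<ge> 1" and "subspace Y" and "closed Y" and "proximinal Y"
  shows "k_chebyshev Y k \<longleftrightarrow>
    (\<forall>f \<in> annihilator_sphere Y. \<forall>x \<in> face f.
        set_dim (((\<lambda>z. z - x) ` face f) \<inter> Y) < enat k)"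
proof
  assume kc: "k_chebyshev Y k"
  show "\<forall>f \<in> annihilator_sphere Y. \<forall>x \<in> face f. set_dim (((\<lambda>z. z - x) ` face f) \<inter> Y) < enat k"
  proof (intro ballI)
    fix f x assume f: "f \<in> annihilator_sphere Y" and x: "x \<in> face f"
    have bl: "bounded_linear f" and fY: "\<And>y. y \<in> Y \<Longrightarrow> f y = 0" and on: "onorm f = 1"
      using f unfolding annihilator_sphere_def by auto
    have lin: "linear f" using bl bounded_linear.linear by blast
    have nx: "norm x = 1" and fx: "f x = 1" using x on unfolding face_def by auto
    have Y0: "0 \<in> Y" using assms(2) subspace_0 by blast
    have ge: "1 \<le> norm (x - y)" if "y \<in> Y" for y
    proof -
      have "1 = f (x - y)" using fx fY[OF that] linear_diff[OF lin] by simp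
      also have "\<dots> \<le> norm (f (x - y))" by simp
      also have "\<dots> \<le> onorm f * norm (x - y)" by (rule onorm[OF bl])
      finally show ?thesis using on by simp
    qed
    have idist: "infdist x Y = 1"
    proof (rule antisym)
      show "infdist x Y \<le> 1" using infdist_le[OF Y0, of x] nx by (simp add: dist_norm)
      show "1 \<le> infdist x Y" unfolding infdist_notempty[of Y, OF ] using Y0
        by (subst infdist_notempty) (auto intro!: cINF_greatest simp: dist_norm ge)
    qed
    have P0: "0 \<in> metric_proj Y x" unfolding metric_proj_def using Y0 nx idist by simp
    have "set_dim (metric_proj Y x) < enat k" using kc unfolding k_chebyshev_def by blast
    then obtain B where B: "finite B" "card B < k" "(\<lambda>z. z - 0) ` metric_proj Y x \<subseteq> span B"
      using set_dim_lt[OF P0] by blast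
    have PB: "metric_proj Y x \<subseteq> span B" using B(3) by simp
    have A0: "0 \<in> ((\<lambda>z. z - x) ` face f) \<inter> Y" using x Y0 by force
    show "set_dim (((\<lambda>z. z - x) ` face f) \<inter> Y) < enat k"
      unfolding set_dim_lt[OF A0]
    proof (intro exI conjI)
      show "(\<lambda>z. z - 0) ` ((\<lambda>z. z - x) ` face f \<inter> Y) \<subseteq> span B"
      proof
        fix w assume "w \<in> (\<lambda>z. z - 0) ` ((\<lambda>z. z - x) ` face f \<inter> Y)"
        then obtain z where z: "z \<in> face f" "w = z - x" "w \<in> Y" by auto
        have nz: "norm z = 1" using z(1) unfolding face_def by auto
        have "x - z \<in> Y" using subspace_neg[OF assms(2) z(3)] z(2) by simp
        then have "x - z \<in> metric_proj Y x" unfolding metric_proj_def using nz idist by simp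
        then have "x - z \<in> span B" using PB by blast
        then have "- (x - z) \<in> span B" by (rule span_neg)
        then show "w \<in> span B" using z(2) by simp
      qed
    qed (use B in auto)
  qed
next
  assume R: "\<forall>f \<in> annihilator_sphere Y. \<forall>x \<in> face f. set_dim (((\<lambda>z. z - x) ` face f) \<inter> Y) < enat k"
  show "k_chebyshev Y k"
    unfolding k_chebyshev_def
  proof (intro conjI allI)
    show "proximinal Y" by fact
    fix x
    obtain y0 where y0: "y0 \<in> metric_proj Y x" using assms(4) unfolding proximinal_def by blast
    have y0Y: "y0 \<in> Y" and ny0: "norm (x - y0) = infdist x Y" using y0 unfolding metric_proj_def by auto
    define d where "d = infdist x Y"
    show "set_dim (metric_proj Y x) < enat k"
      unfolding set_dim_lt[OF y0]
    proof (cases "d = 0")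
      case True
      have "(\<lambda>z. z - y0) ` metric_proj Y x \<subseteq> span {}"
      proof
        fix w assume "w \<in> (\<lambda>z. z - y0) ` metric_proj Y x"
        then obtain y where "y \<in> metric_proj Y x" "w = y - y0" by blast
        then have "norm (x - y) = 0" "norm (x - y0) = 0" using True ny0 d_def
          unfolding metric_proj_def by auto
        then show "w \<in> span {}" using \<open>w = y - y0\<close> by simp
      qed
      then show "\<exists>B. finite B \<and> card B < k \<and> (\<lambda>z. z - y0) ` metric_proj Y x \<subseteq> span B"
        using assms(1) by (intro exI[of _ "{}"]) auto
    next
      case False
      have dpos: "d > 0" using False infdist_nonneg[of x Y] d_def by simp
      define G0 where "G0 = {(y + t *\<^sub>R x, t * d) | y t. y \<in> Y}"
      have "\<exists>F. linear F \<and> (\<forall>v. F v \<le> norm v) \<and> (\<forall>u a. (u, a) \<in> G0 \<longrightarrow> F u = a)"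
      proof (rule hb_graph)
        show "\<And>u v. norm (u + v) \<le> norm u + norm v" by (rule norm_triangle_ineq)
        show "\<And>t u. t \<ge> 0 \<Longrightarrow> norm (t *\<^sub>R u) = t * norm u" by simp
        have "(0::'a, 0::real) = (0 + 0 *\<^sub>R x, 0 * d)" by simp
        then show "(0, 0) \<in> G0" unfolding G0_def using subspace_0[OF assms(2)] by blast
      next
        fix u a v b assume "(u, a) \<in> G0" "(v, b) \<in> G0"
        then obtain y1 t1 y2 t2 where h: "u = y1 + t1 *\<^sub>R x" "a = t1 * d" "y1 \<in> Y"
          "v = y2 + t2 *\<^sub>R x" "b = t2 * d" "y2 \<in> Y" unfolding G0_def by blast
        have "(u + v, a + b) = ((y1 + y2) + (t1 + t2) *\<^sub>R x, (t1 + t2) * d)"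
          using h by (simp add: algebra_simps)
        moreover have "y1 + y2 \<in> Y" using subspace_add[OF assms(2) h(3) h(6)] .
        ultimately show "(u + v, a + b) \<in> G0" unfolding G0_def by blast
      next
        fix u a c assume "(u, a) \<in> G0"
        then obtain y1 t1 where h: "u = y1 + t1 *\<^sub>R x" "a = t1 * d" "y1 \<in> Y"
          unfolding G0_def by blast
        have "(c *\<^sub>R u, c * a) = (c *\<^sub>R y1 + (c * t1) *\<^sub>R x, (c * t1) * d)"
          using h by (simp add: algebra_simps)
        moreover have "c *\<^sub>R y1 \<in> Y" using subspace_scale[OF assms(2) h(3)] .
        ultimately show "(c *\<^sub>R u, c * a) \<in> G0" unfolding G0_def by blast
      next
        fix u a assume "(u, a) \<in> G0"
        then obtain y1 t where h: "u = y1 + t *\<^sub>R x" "a = t * d" "y1 \<in> Y"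
          unfolding G0_def by blast
        show "a \<le> norm u"
        proof (cases "t > 0")
          case False
          then have "a \<le> 0" using h dpos by (simp add: mult_nonpos_nonneg)
          then show ?thesis by (meson norm_ge_zero order_trans)
        next
          case True
          have "- ((1/t) *\<^sub>R y1) \<in> Y" using assms(2) h(3) by (simp add: subspace_neg subspace_scale)
          then have "d \<le> dist x (- ((1/t) *\<^sub>R y1))" unfolding d_def by (rule infdist_le)
          also have "\<dots> = norm (x + (1/t) *\<^sub>R y1)" by (simp add: dist_norm)
          finally have "t * d \<le> t * norm (x + (1/t) *\<^sub>R y1)" using True by simp
          also have "\<dots> = norm (t *\<^sub>R (x + (1/t) *\<^sub>R y1))" using True by simp
          also have "t *\<^sub>R (x + (1/t) *\<^sub>R y1) = u" using h True by (simp add: algebra_simps)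
          finally show ?thesis using h by simp
        qed
      qed
      then obtain F where lin: "linear F" and Fle: "\<And>v. F v \<le> norm v"
        and FG: "\<And>u a. (u, a) \<in> G0 \<Longrightarrow> F u = a" by blast
      have FY: "F y = 0" if "y \<in> Y" for y
      proof -
        have "(y, 0) = (y + 0 *\<^sub>R x, 0 * d)" by simp
        then have "(y, 0) \<in> G0" unfolding G0_def using that by blast
        then show ?thesis by (rule FG)
      qed
      have Fx: "F x = d"
      proof -
        have "(x, d) = (0 + 1 *\<^sub>R x, 1 * d)" by simp
        then have "(x, d) \<in> G0" unfolding G0_def using subspace_0[OF assms(2)] by blast
        then show ?thesis by (rule FG)
      qed
      have Fabs: "norm (F v) \<le> 1 * norm v" for v
      proof -
        have "- F v = F (- v)" using linear_cmul[OF lin, of "-1" v] by simp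
        also have "\<dots> \<le> norm v" using Fle[of "- v"] by simp
        finally show ?thesis using Fle[of v] by simp
      qed
      have bl: "bounded_linear F"
        by (rule bounded_linear_intro[of F 1]) (use linear_add[OF lin] linear_cmul[OF lin] Fabs in auto)
      have nxy0: "norm (x - y0) = d" using ny0 d_def by simp
      have Fxy0: "F (x - y0) = d" using linear_diff[OF lin] Fx FY[OF y0Y] by simp
      have on: "onorm F = 1"
      proof (rule antisym)
        show "onorm F \<le> 1" by (rule onorm_bound) (use Fabs in auto)
        have "norm (F (x - y0)) / norm (x - y0) \<le> onorm F" by (rule le_onorm[OF bl])
        then show "1 \<le> onorm F" using Fxy0 nxy0 dpos by simp
      qed
      have Fann: "F \<in> annihilator_sphere Y" unfolding annihilator_sphere_def using bl FY on by blast
      have inface: "(1/d) *\<^sub>R (x - y) \<in> face F" if "y \<in> metric_proj Y x" for y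
      proof -
        have y: "y \<in> Y" "norm (x - y) = d" using that d_def unfolding metric_proj_def by auto
        have "F ((1/d) *\<^sub>R (x - y)) = (1/d) * (F x - F y)"
          using linear_cmul[OF lin] linear_diff[OF lin] by simp
        also have "\<dots> = 1" using Fx FY[OF y(1)] dpos by simp
        finally show ?thesis unfolding face_def using y(2) dpos on by simp
      qed
      define u where "u = (1/d) *\<^sub>R (x - y0)"
      have u: "u \<in> face F" unfolding u_def using inface[OF y0] .
      have "set_dim (((\<lambda>z. z - u) ` face F) \<inter> Y) < enat k" using R Fann u by blast
      moreover have A0: "0 \<in> ((\<lambda>z. z - u) ` face F) \<inter> Y" using u subspace_0[OF assms(2)] by force
      ultimately obtain B where B: "finite B" "card B < k"
        "(\<lambda>z. z - 0) ` (((\<lambda>z. z - u) ` face F) \<inter> Y) \<subseteq> span B"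
        using set_dim_lt[OF A0] by blast
      have "(\<lambda>z. z - y0) ` metric_proj Y x \<subseteq> span B"
      proof
        fix w assume "w \<in> (\<lambda>z. z - y0) ` metric_proj Y x"
        then obtain y where y: "y \<in> metric_proj Y x" "w = y - y0" by blast
        have yY: "y \<in> Y" using y unfolding metric_proj_def by auto
        have eq: "(1/d) *\<^sub>R (x - y) - u = (1/d) *\<^sub>R (y0 - y)" unfolding u_def
          by (simp add: algebra_simps)
        have "(1/d) *\<^sub>R (y0 - y) \<in> Y"
          using assms(2) y0Y yY by (simp add: subspace_scale subspace_diff)
        moreover have "(1/d) *\<^sub>R (x - y) - u \<in> (\<lambda>z. z - u) ` face F"
          using inface[OF y(1)] by (rule imageI)
        ultimately have "(1/d) *\<^sub>R (x - y) - u \<in> ((\<lambda>z. z - u) ` face F) \<inter> Y"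
          using eq by simp
        then have "(1/d) *\<^sub>R (y0 - y) \<in> span B" using B(3) eq by auto
        then have "(- d) *\<^sub>R ((1/d) *\<^sub>R (y0 - y)) \<in> span B" by (rule span_scale)
        moreover have "(- d) *\<^sub>R ((1/d) *\<^sub>R (y0 - y)) = w" using y(2) dpos
          by (simp add: algebra_simps)
        ultimately show "w \<in> span B" by simp
      qed
      then show "\<exists>B. finite B \<and> card B < k \<and> (\<lambda>z. z - y0) ` metric_proj Y x \<subseteq> span B"
        using B by blast
    qed
  qed
qed

end
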